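(* Let $H$ be a finite group of odd order such that $d(\mathbb{Z}_2\times H)=2$. Then $\mathsf{GEN}(\mathbb{Z}_2\times H)=*0$.
   Context: For a finite group $G$, $\mathsf{GEN}(G)$ is the following impartial two-player game. A position is a set of elements selected so far; the starting position is $\emptyset$. From a position $P$ with $\langle P\rangle\neq G$, the player to move selects some $g\in G\setminus P$, producing the position $P\cup\{g\}$ (these are the options of $P$); a position $P$ with $\langle P\rangle = G$ has no options. The nim-number of a position is defined recursively by $\operatorname{nim}(P)=\operatorname{mex}\{\operatorname{nim}(Q): Q \text{ an option of } P\}$, where $\operatorname{mex}(A)$ is the least nonnegative integer not in $A$. We write $\mathsf{GEN}(G)=*n$ if $\operatorname{nim}(\emptyset)=n$. $d(G)$ denotes the minimum size of a generating set of $G$; $\mathbb{Z}_2$ is the cyclic group of order $2$. *)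

theory Defs
  imports "HOL-Algebra.Algebra"
begin

definition mex :: "nat set \<Rightarrow> nat" where
  "mex A = (LEAST n. n \<notin> A)"

text \<open>A position P (a subset of the carrier) with generate G P = carrier G has no options;
  otherwise the options are P \<union> {g} for g in carrier G - P.
  Outside the meaningful domain (infinite carrier, P not a subset of the carrier)
  the value is the junk value 0.\<close>
function gen_nim :: "('a, 'b) monoid_scheme \<Rightarrow> 'a set \<Rightarrow> nat" where
  "gen_nim G P =
     (if finite (carrier G) \<and> P \<subseteq> carrier G \<and> generate G P \<noteq> carrier G
      then mex ((\<lambda>g. gen_nim G (insert g P)) ` (carrier G - P))
      else 0)"
  by auto
termination
proof (relation "measure (\<lambda>(G, P). card (carrier G - P))", simp)
  fix G :: "('a, 'b) monoid_scheme" and P x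
  assume h: "finite (carrier G) \<and> P \<subseteq> carrier G \<and> generate G P \<noteq> carrier G"
    and x: "x \<in> carrier G - P"
  have "carrier G - insert x P \<subset> carrier G - P" using x by auto
  then have "card (carrier G - insert x P) < card (carrier G - P)"
    using h by (simp add: psubset_card_mono)
  then show "((G, insert x P), G, P) \<in> measure (\<lambda>(G, P). card (carrier G - P))"
    by simp
qed

text \<open>GEN(G) = *n iff the nim-number of the empty position is n.\<close>
definition GEN_value :: "('a, 'b) monoid_scheme \<Rightarrow> nat" where
  "GEN_value G = gen_nim G {}"

definition min_gen_size :: "('a, 'b) monoid_scheme \<Rightarrow> nat" where
  "min_gen_size G =
     (LEAST n. \<exists>S. S \<subseteq> carrier G \<and> finite S \<and> card S = n \<and> generate G S = carrier G)"

end

theory Submission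
  imports Defs
begin

declare gen_nim.simps[simp del]

lemma mex_zero_iff:
  assumes "finite A"
  shows "mex A = 0 \<longleftrightarrow> 0 \<notin> A"
proof
  assume "mex A = 0"
  obtain n where "n \<notin> A" using assms ex_new_if_finite infinite_UNIV_nat by blast
  then have "(LEAST n. n \<notin> A) \<notin> A" by (rule LeastI)
  then show "0 \<notin> A" using \<open>mex A = 0\<close> unfolding mex_def by simp
next
  assume "0 \<notin> A"
  then show "mex A = 0" unfolding mex_def by (rule Least_eq_0)
qed

locale z2h =
  fixes H :: "('a, 'b) monoid_scheme"
  assumes grp: "group H" and fin: "finite (carrier H)" and oddH: "odd (order H)"
begin

abbreviation "G \<equiv> integer_mod_group 2 \<times>\<times> H"
abbreviation "t \<equiv> ((1::int), \<one>\<^bsub>H\<^esub>)"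

lemma G_group: "group G"
  by (simp add: DirProd_group grp)

lemma carrZ2[simp]: "carrier (integer_mod_group 2) = {0,1}"
  by (auto simp: carrier_integer_mod_group)

lemma rH[simp]: "h \<in> carrier H \<Longrightarrow> h \<otimes>\<^bsub>H\<^esub> \<one>\<^bsub>H\<^esub> = h"
  using grp by (simp add: group.is_monoid monoid.r_one)

lemma carrG: "carrier G = {0,1} \<times> carrier H"
  by simp

lemma finG: "finite (carrier G)"
  using fin by (simp add: carrG)

lemma t_carr: "t \<in> carrier G"
  using grp by (simp add: carrier_integer_mod_group group.is_monoid monoid.one_closed)

lemma mult_t: "x \<in> carrier G \<Longrightarrow> x \<otimes>\<^bsub>G\<^esub> t = ((fst x + 1) mod 2, snd x)"
  using grp by (auto simp: carrier_integer_mod_group mult_DirProd' monoid.r_one[OF group.is_monoid[OF grp]])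

lemma mult_t_carr: "x \<in> carrier G \<Longrightarrow> x \<otimes>\<^bsub>G\<^esub> t \<in> carrier G"
  by (auto simp: mult_t carrG)

lemma mult_tt: "x \<in> carrier G \<Longrightarrow> (x \<otimes>\<^bsub>G\<^esub> t) \<otimes>\<^bsub>G\<^esub> t = x"
proof -
  assume "x \<in> carrier G"
  then obtain a h where "x = (a, h)" "a \<in> {0,1}" "h \<in> carrier H" by (auto simp: carrG)
  then show ?thesis by (auto simp: mult_t mult_t_carr carrG)
qed

lemma mult_t_neq: "x \<in> carrier G \<Longrightarrow> x \<otimes>\<^bsub>G\<^esub> t \<noteq> x"
proof -
  assume "x \<in> carrier G"
  then obtain a h where "x = (a, h)" "a \<in> {0,1}" "h \<in> carrier H" by (auto simp: carrG)
  then show ?thesis by (auto simp: mult_t carrG)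
qed

lemma pow_G: "(a, h) \<in> carrier G \<Longrightarrow> (a, h) [^]\<^bsub>G\<^esub> (n::nat) = (a [^]\<^bsub>integer_mod_group 2\<^esub> n, h [^]\<^bsub>H\<^esub> n)"
  by (induction n) auto

lemma pow_order_t:
  assumes "e \<in> carrier G" "fst e = 1"
  shows "e [^]\<^bsub>G\<^esub> order H = t"
proof -
  have hc: "snd e \<in> carrier H" using assms(1) by (cases e) auto
  have e: "e = (1, snd e)" using assms(2) by (cases e) auto
  have ec: "(1::int, snd e) \<in> carrier G" using hc by simp
  have m: "(int (order H) * 1) mod 2 = 1" using oddH by presburger
  have o: "snd e [^]\<^bsub>H\<^esub> order H = \<one>\<^bsub>H\<^esub>" by (rule group.pow_order_eq_1[OF grp hc])
  have "(1::int, snd e) [^]\<^bsub>G\<^esub> order H = ((1::int) [^]\<^bsub>integer_mod_group 2\<^esub> order H, snd e [^]\<^bsub>H\<^esub> order H)"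
    by (rule pow_G[OF ec])
  also have "\<dots> = t" by (simp only: pow_integer_mod_group m o of_nat_numeral)
  finally show ?thesis using e by metis
qed

lemma pow_in_generate: "x \<in> generate G E \<Longrightarrow> x [^]\<^bsub>G\<^esub> (n::nat) \<in> generate G E"
proof (induction n)
  case 0
  show ?case using generate.one[of G E] by simp
next
  case (Suc n)
  then have "x [^]\<^bsub>G\<^esub> n \<in> generate G E" by simp
  then show ?case using Suc.prems unfolding nat_pow_Suc by (rule generate.eng)
qed

lemma gen_sub:
  assumes "E \<subseteq> carrier G" "S \<subseteq> generate G E"
  shows "generate G S \<subseteq> generate G E"
  by (rule group.generate_subgroup_incl[OF G_group assms(2) group.generate_is_subgroup[OF G_group assms(1)]])

lemma gen_carr:
  assumes "E \<subseteq> carrier G"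
  shows "generate G E \<subseteq> carrier G"
  by (rule group.generate_incl[OF G_group assms])

lemma lem1:
  assumes "E \<subseteq> carrier G" "e \<in> E" "fst e = 1" "generate G (insert t E) = carrier G"
  shows "generate G E = carrier G"
proof -
  have "e [^]\<^bsub>G\<^esub> order H \<in> generate G E"
    using assms(2) by (intro pow_in_generate generate.incl)
  moreover have "e [^]\<^bsub>G\<^esub> order H = t"
    using assms(1,2,3) by (intro pow_order_t) auto
  ultimately have "t \<in> generate G E" by simp
  moreover have "E \<subseteq> generate G E" using generate.incl by (intro subsetI)
  ultimately have "insert t E \<subseteq> generate G E" by (rule insert_subsetI)
  then have "generate G (insert t E) \<subseteq> generate G E"
    by (rule gen_sub[OF assms(1)])
  then show ?thesis using assms(4) gen_carr[OF assms(1)] by (rule_tac equalityI) auto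
qed

lemma case_lem:
  assumes "D \<subseteq> carrier G" "y \<in> carrier G" "generate G (insert t (insert y D)) = carrier G"
  shows "\<exists>z\<in>{y, y \<otimes>\<^bsub>G\<^esub> t}. generate G (insert z D) = carrier G"
proof (cases "\<exists>e\<in>insert y D. fst e = 1")
  case True
  then obtain e where "e \<in> insert y D" "fst e = 1" by blast
  then have "generate G (insert y D) = carrier G"
    using lem1[of "insert y D" e] assms by auto
  then show ?thesis by blast
next
  case False
  define z where "z = y \<otimes>\<^bsub>G\<^esub> t"
  have zc: "z \<in> carrier G" using z_def mult_t_carr assms(2) by simp
  have fz: "fst z = 1" using False assms(2) by (auto simp: z_def mult_t carrG)
  have EC: "insert z D \<subseteq> carrier G" using zc assms(1) by auto
  have "y \<in> generate G (insert t (insert z D))"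
  proof -
    have "z \<otimes>\<^bsub>G\<^esub> t \<in> generate G (insert t (insert z D))"
      by (intro generate.eng generate.incl) auto
    then show ?thesis using mult_tt assms(2) z_def by simp
  qed
  then have "insert t (insert y D) \<subseteq> generate G (insert t (insert z D))"
    using generate.incl[of _ "insert t (insert z D)" G] by blast
  then have "generate G (insert t (insert y D)) \<subseteq> generate G (insert t (insert z D))"
    using group.generate_subgroup_incl[OF G_group] group.generate_is_subgroup[OF G_group] EC t_carr
    by (metis insert_subset)
  moreover have "generate G (insert t (insert z D)) \<subseteq> carrier G"
    using group.generate_incl[OF G_group] EC t_carr by simp
  ultimately have "generate G (insert t (insert z D)) = carrier G" using assms(3) by blast
  then have "generate G (insert z D) = carrier G" using lem1[OF EC _ fz] by blast
  then show ?thesis using z_def by blast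
qed

definition W :: "(int \<times> 'a) set \<Rightarrow> bool" where
  "W P \<longleftrightarrow> P \<subseteq> carrier G \<and> (generate G P = carrier G \<or>
     ((\<forall>x\<in>P. x \<otimes>\<^bsub>G\<^esub> t \<in> P) \<and> (\<forall>y\<in>carrier G. generate G (insert y P) \<noteq> carrier G)))"

lemma nim_nonterm:
  assumes "P \<subseteq> carrier G" "generate G P \<noteq> carrier G"
  shows "gen_nim G P = mex ((\<lambda>g. gen_nim G (insert g P)) ` (carrier G - P))"
  using assms finG by (subst gen_nim.simps) simp

lemma nim_zero_iff:
  assumes "P \<subseteq> carrier G" "generate G P \<noteq> carrier G"
  shows "gen_nim G P = 0 \<longleftrightarrow> (\<forall>g\<in>carrier G - P. gen_nim G (insert g P) \<noteq> 0)"
proof -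
  let ?A = "(\<lambda>g. gen_nim G (insert g P)) ` (carrier G - P)"
  have fA: "finite ?A" using finG by blast
  have "gen_nim G P = 0 \<longleftrightarrow> 0 \<notin> ?A"
    by (simp only: nim_nonterm[OF assms] mex_zero_iff[OF fA])
  also have "\<dots> \<longleftrightarrow> (\<forall>g\<in>carrier G - P. gen_nim G (insert g P) \<noteq> 0)" by (metis (no_types, lifting) image_iff)
  finally show ?thesis .
qed

lemma nim_term:
  assumes "generate G P = carrier G"
  shows "gen_nim G P = 0"
  using assms by (subst gen_nim.simps) simp

lemma main: "W P \<Longrightarrow> gen_nim G P = 0"
proof (induction "card (carrier G - P)" arbitrary: P rule: less_induct)
  case less
  have Pc: "P \<subseteq> carrier G" using less.prems W_def by blast
  show ?case
  proof (cases "generate G P = carrier G")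
    case True
    then show ?thesis by (rule nim_term)
  next
    case False
    then have cl: "\<forall>x\<in>P. x \<otimes>\<^bsub>G\<^esub> t \<in> P"
      and ng: "\<forall>y\<in>carrier G. generate G (insert y P) \<noteq> carrier G"
      using less.prems W_def by auto
    show ?thesis
    proof (subst nim_zero_iff[OF Pc False], intro ballI)
      fix x assume x: "x \<in> carrier G - P"
      define D where "D = insert x P"
      have Dc: "D \<subseteq> carrier G" using x Pc D_def by auto
      have Dng: "generate G D \<noteq> carrier G" using ng x D_def by auto
      have card_lt: "\<And>g Q. g \<in> carrier G - Q \<Longrightarrow> card (carrier G - insert g Q) < card (carrier G - Q)"
        using finG by (metis Diff_insert card_Diff1_less finite_Diff)
      have cD: "card (carrier G - D) < card (carrier G - P)"
        using card_lt[OF x] D_def by simp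
      have "\<exists>g\<in>carrier G - D. gen_nim G (insert g D) = 0"
      proof (cases "\<exists>z\<in>carrier G - D. generate G (insert z D) = carrier G")
        case True
        then show ?thesis using nim_term by blast
      next
        case False2: False
        define g where "g = x \<otimes>\<^bsub>G\<^esub> t"
        have gc: "g \<in> carrier G" using g_def mult_t_carr x by auto
        have gP: "g \<notin> P"
        proof
          assume "g \<in> P"
          then have "g \<otimes>\<^bsub>G\<^esub> t \<in> P" using cl by blast
          then show False using mult_tt x g_def by auto
        qed
        have gD: "g \<notin> D" using gP mult_t_neq x g_def D_def by auto
        have "W (insert g D)"
          unfolding W_def
        proof (intro conjI disjI2 ballI)
          show "insert g D \<subseteq> carrier G" using gc Dc by auto
        next
          fix w assume w: "w \<in> insert g D"
          show "w \<otimes>\<^bsub>G\<^esub> t \<in> insert g D"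
            using w cl g_def D_def mult_tt x by auto
        next
          fix y assume y: "y \<in> carrier G"
          show "generate G (insert y (insert g D)) \<noteq> carrier G"
          proof
            assume gen: "generate G (insert y (insert g D)) = carrier G"
            let ?S = "insert t (insert y D)"
            have Sc: "?S \<subseteq> carrier G" using y Dc t_carr by auto
            have "g \<in> generate G ?S"
              unfolding g_def D_def by (intro generate.eng generate.incl) auto
            then have "insert y (insert g D) \<subseteq> generate G ?S"
              using generate.incl[of _ ?S G] by blast
            then have "generate G (insert y (insert g D)) \<subseteq> generate G ?S"
              using group.generate_subgroup_incl[OF G_group] group.generate_is_subgroup[OF G_group Sc]
              by blast
            moreover have "generate G ?S \<subseteq> carrier G" using group.generate_incl[OF G_group Sc] .
            ultimately have "generate G ?S = carrier G" using gen by blast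
            then obtain z where z: "z \<in> {y, y \<otimes>\<^bsub>G\<^esub> t}" "generate G (insert z D) = carrier G"
              using case_lem[OF Dc y] by blast
            have zc: "z \<in> carrier G" using z(1) y mult_t_carr by auto
            show False
            proof (cases "z \<in> D")
              case True
              then show False using z(2) Dng by (simp add: insert_absorb)
            next
              case False
              then show False using False2 z(2) zc by blast
            qed
          qed
        qed
        moreover have "card (carrier G - insert g D) < card (carrier G - P)"
          using card_lt[of g D] gc gD cD by auto
        ultimately have "gen_nim G (insert g D) = 0" using less.hyps by blast
        then show ?thesis using gc gD by blast
      qed
      then have "gen_nim G D \<noteq> 0"
        using nim_zero_iff[OF Dc Dng] by blast
      then show "gen_nim G (insert x P) \<noteq> 0" using D_def by simp
    qed
  qed
qed

end

theorem proposition4p9: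
  fixes H :: "('a, 'b) monoid_scheme"
  assumes "group H"
    and "finite (carrier H)"
    and "odd (order H)"
    and "min_gen_size (integer_mod_group 2 \<times>\<times> H) = 2"
  shows "GEN_value (integer_mod_group 2 \<times>\<times> H) = 0"
proof -
  interpret z2h H using assms(1-3) by (rule z2h.intro)
  have "W {}"
    unfolding W_def
  proof (intro conjI disjI2 ballI)
    fix y assume y: "y \<in> carrier G"
    show "generate G (insert y {}) \<noteq> carrier G"
    proof
      assume "generate G (insert y {}) = carrier G"
      then have "min_gen_size G \<le> 1"
        unfolding min_gen_size_def using y
        by (intro Least_le exI[of _ "{y}"]) auto
      then show False using assms(4) by simp
    qed
  qed auto
  then show ?thesis unfolding GEN_value_def by (rule main)
qed

end
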